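(* Let $k\ge 3$, $n_1=\cdots=n_k\ge 2$, and let $G,G'\in\mathcal{O}(K_{n_1,\dots,n_k})$. Suppose that $G$ and $G'$ belong to the same one of the following three classes: (Case 1) $G=\Gamma(\text{complete};\ t_i=\mathrm{ss}\text{ for }i\in I,\ t_i=\mathrm{sc}\text{ for }i\notin I)$ for some $I\subseteq[k]$; (Case 2) $G=\Gamma(\text{star toward }j;\ t_j=\mathrm{sc},\ t_i=\mathrm{ss}\text{ for }i\in I,\ t_i=\mathrm{c}\text{ for }i\notin I\cup\{j\})$ for some $j\in[k]$ and $I\subseteq[k]\setminus\{j\}$; (Case 3) the same as Case 2 but with $t_j=\mathrm{c}$; and similarly $G'$ with index set $I'$ (and possibly a different index $j'$). If $|I|=|I'|$, then $G$ and $G'$ are isomorphic.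
   Context: $V=U_1\sqcup\cdots\sqcup U_k$, $|U_i|=n_i$; $K_{n_1,\dots,n_k}$ has edges exactly between different parts. The local complement $c_v(G)$ complements the edges among the neighbours of $v$; $\mathcal{O}(G)$ is the set of graphs on $V$ obtainable from $G$ by finite sequences of local complements. Graph family $\Gamma$: each $i$ gets a type $t_i\in\{\mathrm{c},\mathrm{sc},\mathrm{ss}\}$: $\mathrm{c}$: $U_i$ a clique, $R_i=U_i$; $\mathrm{sc}$: $U_i$ independent, $R_i=U_i$; $\mathrm{ss}$: a center $c_i\in U_i$ adjacent to all other vertices of $U_i$, no other internal edges, $R_i=\{c_i\}$. Central type "complete": for all $i\ne l$, all edges between $R_i$ and $R_l$; "star toward $j$": for each $i\ne j$ all edges between $R_i$ and $R_j$, and no other edges between different parts. (Every graph in $\mathcal{O}(K_{n_1,\dots,n_k})$ is of one of the three case forms.) *)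

theory Defs
  imports Main
begin

(* Graphs on a vertex set V are edge predicates E :: 'a => 'a => bool,
   which are False outside V (all graphs below have this property). *)

definition vertices :: "nat \<Rightarrow> (nat \<Rightarrow> 'a set) \<Rightarrow> 'a set" where
  "vertices k U = (\<Union>i<k. U i)"

definition complete_multipartite :: "nat \<Rightarrow> (nat \<Rightarrow> 'a set) \<Rightarrow> 'a \<Rightarrow> 'a \<Rightarrow> bool" where
  "complete_multipartite k U x y =
     (\<exists>i<k. \<exists>l<k. i \<noteq> l \<and> x \<in> U i \<and> y \<in> U l)"

definition local_comp :: "'a \<Rightarrow> ('a \<Rightarrow> 'a \<Rightarrow> bool) \<Rightarrow> 'a \<Rightarrow> 'a \<Rightarrow> bool" where
  "local_comp v E x y =
     (if x \<noteq> y \<and> E v x \<and> E v y then \<not> E x y else E x y)"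

inductive_set lc_orbit :: "'a set \<Rightarrow> ('a \<Rightarrow> 'a \<Rightarrow> bool) \<Rightarrow> ('a \<Rightarrow> 'a \<Rightarrow> bool) set"
  for V :: "'a set" and G :: "'a \<Rightarrow> 'a \<Rightarrow> bool" where
  base: "G \<in> lc_orbit V G"
| step: "H \<in> lc_orbit V G \<Longrightarrow> v \<in> V \<Longrightarrow> local_comp v H \<in> lc_orbit V G"

datatype ptype = C | SC | SS

datatype ctype = Complete | Star nat

definition Rset :: "(nat \<Rightarrow> 'a set) \<Rightarrow> (nat \<Rightarrow> ptype) \<Rightarrow> (nat \<Rightarrow> 'a) \<Rightarrow> nat \<Rightarrow> 'a set" where
  "Rset U t c i = (if t i = SS then {c i} else U i)"

(* the graph Gamma(central type; types t_i), with centers c i for the ss parts *)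
definition Gamma :: "nat \<Rightarrow> (nat \<Rightarrow> 'a set) \<Rightarrow> ctype \<Rightarrow> (nat \<Rightarrow> ptype) \<Rightarrow> (nat \<Rightarrow> 'a)
    \<Rightarrow> 'a \<Rightarrow> 'a \<Rightarrow> bool" where
  "Gamma k U ct t c x y =
     ((\<exists>i<k. x \<in> U i \<and> y \<in> U i \<and> x \<noteq> y \<and>
         (case t i of C \<Rightarrow> True | SC \<Rightarrow> False | SS \<Rightarrow> x = c i \<or> y = c i))
    \<or> (\<exists>i<k. \<exists>l<k. i \<noteq> l \<and> x \<in> U i \<and> y \<in> U l \<and>
         (case ct of
            Complete \<Rightarrow> x \<in> Rset U t c i \<and> y \<in> Rset U t c l
          | Star j \<Rightarrow> (l = j \<and> x \<in> Rset U t c i \<and> y \<in> Rset U t c j)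
                    \<or> (i = j \<and> x \<in> Rset U t c j \<and> y \<in> Rset U t c l))))"

(* the three case forms; the index j is ignored in case 1 *)
definition case_types :: "nat \<Rightarrow> nat \<Rightarrow> nat set \<Rightarrow> nat \<Rightarrow> ptype" where
  "case_types cs j I i =
     (if cs = 1 then (if i \<in> I then SS else SC)
      else if i = j then (if cs = 2 then SC else C)
      else if i \<in> I then SS else C)"

definition case_ctype :: "nat \<Rightarrow> nat \<Rightarrow> ctype" where
  "case_ctype cs j = (if cs = 1 then Complete else Star j)"

definition case_graph :: "nat \<Rightarrow> (nat \<Rightarrow> 'a set) \<Rightarrow> nat \<Rightarrow> nat \<Rightarrow> nat set \<Rightarrow> (nat \<Rightarrow> 'a)
    \<Rightarrow> 'a \<Rightarrow> 'a \<Rightarrow> bool" where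
  "case_graph k U cs j I c = Gamma k U (case_ctype cs j) (case_types cs j I) c"

definition case_params :: "nat \<Rightarrow> (nat \<Rightarrow> 'a set) \<Rightarrow> nat \<Rightarrow> nat \<Rightarrow> nat set \<Rightarrow> (nat \<Rightarrow> 'a) \<Rightarrow> bool" where
  "case_params k U cs j I c =
     (I \<subseteq> {..<k} \<and> (cs \<noteq> 1 \<longrightarrow> j < k \<and> j \<notin> I) \<and> (\<forall>i\<in>I. c i \<in> U i))"

definition graph_iso :: "'a set \<Rightarrow> ('a \<Rightarrow> 'a \<Rightarrow> bool) \<Rightarrow> ('a \<Rightarrow> 'a \<Rightarrow> bool) \<Rightarrow> bool" where
  "graph_iso V E E' = (\<exists>f. bij_betw f V V \<and> (\<forall>x\<in>V. \<forall>y\<in>V. E x y = E' (f x) (f y)))"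

end

theory Submission
  imports Defs
begin

lemma bij_point:
  assumes "finite A" "finite B" "card A = card B" "a \<in> A" "b \<in> B"
  shows "\<exists>g. bij_betw g A B \<and> g a = b"
proof -
  have "card (A - {a}) = card (B - {b})" using assms by simp
  then obtain h where h: "bij_betw h (A - {a}) (B - {b})"
    using finite_same_card_bij assms by (meson finite_Diff)
  have b1: "bij_betw (\<lambda>x. b) {a} {b}" by (simp add: bij_betw_def)
  have "bij_betw (\<lambda>x. if x \<in> {a} then b else h x) ({a} \<union> (A - {a})) ({b} \<union> (B - {b}))"
    by (rule bij_betw_disjoint_Un[OF b1 h]) auto
  moreover have "{a} \<union> (A - {a}) = A" "{b} \<union> (B - {b}) = B" using assms by auto
  ultimately show ?thesis by (intro exI[of _ "\<lambda>x. if x \<in> {a} then b else h x"]) auto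
qed

lemma bij_set:
  assumes "finite S" "finite S'" "A \<subseteq> S" "B \<subseteq> S'" "card A = card B" "card S = card S'"
  shows "\<exists>s. bij_betw s S S' \<and> bij_betw s A B"
proof -
  have fA: "finite A" "finite B" using assms finite_subset by auto
  obtain h1 where h1: "bij_betw h1 A B" using finite_same_card_bij fA assms by blast
  have "card (S - A) = card (S' - B)" using assms fA by (simp add: card_Diff_subset)
  then obtain h2 where h2: "bij_betw h2 (S - A) (S' - B)"
    using finite_same_card_bij assms by (meson finite_Diff)
  have "bij_betw (\<lambda>x. if x \<in> A then h1 x else h2 x) (A \<union> (S - A)) (B \<union> (S' - B))"
    by (rule bij_betw_disjoint_Un[OF h1 h2]) auto
  moreover have "A \<union> (S - A) = S" "B \<union> (S' - B) = S'" using assms by auto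
  moreover have "bij_betw (\<lambda>x. if x \<in> A then h1 x else h2 x) A B"
    using h1 by (rule bij_betw_cong[THEN iffD1, rotated]) auto
  ultimately show ?thesis by metis
qed

lemma Gamma_at:
  assumes disj: "\<forall>i<k. \<forall>l<k. i \<noteq> l \<longrightarrow> U i \<inter> U l = {}"
    and x: "x \<in> U a" "a < k" and y: "y \<in> U b" "b < k"
  shows "Gamma k U ct t c x y = ((a = b \<and> x \<noteq> y \<and> (case t a of C \<Rightarrow> True | SC \<Rightarrow> False | SS \<Rightarrow> x = c a \<or> y = c a))
     \<or> (a \<noteq> b \<and> (case ct of Complete \<Rightarrow> x \<in> Rset U t c a \<and> y \<in> Rset U t c b
          | Star j \<Rightarrow> (b = j \<and> x \<in> Rset U t c a \<and> y \<in> Rset U t c j)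
                    \<or> (a = j \<and> x \<in> Rset U t c j \<and> y \<in> Rset U t c b))))" (is "?L = ?R")
proof -
  have xa: "\<And>i. i < k \<Longrightarrow> x \<in> U i \<longleftrightarrow> i = a" using disj x by blast
  have yb: "\<And>i. i < k \<Longrightarrow> y \<in> U i \<longleftrightarrow> i = b" using disj y by blast
  show ?thesis
  proof (rule iffI)
    assume L: ?L
    from L[unfolded Gamma_def] show "?R"
    proof (elim disjE exE conjE)
      fix i assume "i < k" "x \<in> U i" "y \<in> U i" "x \<noteq> y" "(case t i of C \<Rightarrow> True | SC \<Rightarrow> False | SS \<Rightarrow> x = c i \<or> y = c i)"
      moreover have "i = a" "i = b" using xa yb calculation by auto
      ultimately show ?R by (cases "t i") auto
    next
      fix i l assume "i < k" "l < k" "i \<noteq> l" "x \<in> U i" "y \<in> U l" and cc: "(case ct of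
            Complete \<Rightarrow> x \<in> Rset U t c i \<and> y \<in> Rset U t c l
          | Star j \<Rightarrow> (l = j \<and> x \<in> Rset U t c i \<and> y \<in> Rset U t c j)
                    \<or> (i = j \<and> x \<in> Rset U t c j \<and> y \<in> Rset U t c l))"
      moreover have "i = a" "l = b" using xa yb calculation by auto
      ultimately show ?R by (cases ct) auto
    qed
  next
    assume R: ?R
    show "?L" unfolding Gamma_def using R x y by (elim disjE conjE) blast+
  qed
qed


lemma transport:
  assumes disj: "\<forall>i<k. \<forall>l<k. i \<noteq> l \<longrightarrow> U i \<inter> U l = {}"
    and sig: "bij_betw \<sigma> {..<k} {..<k}"
    and g: "\<forall>i<k. bij_betw (g i) (U i) (U (\<sigma> i))"
    and t: "\<forall>i<k. t' (\<sigma> i) = t i"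
    and cc: "\<forall>i<k. t i = SS \<longrightarrow> c i \<in> U i \<and> c' (\<sigma> i) = g i (c i)"
    and ct: "(ct = Complete \<and> ct' = Complete) \<or> (\<exists>j. j<k \<and> ct = Star j \<and> ct' = Star (\<sigma> j))"
    and x: "x \<in> U a" "a < k" and y: "y \<in> U b" "b < k"
  shows "Gamma k U ct t c x y = Gamma k U ct' t' c' (g a x) (g b y)"
proof -
  have sa: "\<sigma> a < k" "\<sigma> b < k" using sig x y by (auto simp: bij_betw_def)
  have gx: "g a x \<in> U (\<sigma> a)" using g x by (meson bij_betwE)
  have gy: "g b y \<in> U (\<sigma> b)" using g y by (meson bij_betwE)
  have ia: "inj_on (g a) (U a)" "inj_on (g b) (U b)" using g x y by (auto simp: bij_betw_def)
  have seq: "\<And>i l. i < k \<Longrightarrow> l < k \<Longrightarrow> \<sigma> i = \<sigma> l \<longleftrightarrow> i = l"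
    using sig by (auto simp: bij_betw_def inj_on_def)
  have Rx: "g a x \<in> Rset U t' c' (\<sigma> a) \<longleftrightarrow> x \<in> Rset U t c a"
    using cc t x ia(1) gx unfolding Rset_def by (auto simp: inj_on_def)
  have Ry: "g b y \<in> Rset U t' c' (\<sigma> b) \<longleftrightarrow> y \<in> Rset U t c b"
    using cc t y ia(2) gy unfolding Rset_def by (auto simp: inj_on_def)
  have cx: "t a = SS \<Longrightarrow> g a x = c' (\<sigma> a) \<longleftrightarrow> x = c a"
    using cc x ia(1) by (auto simp: inj_on_def)
  have cy: "t a = SS \<Longrightarrow> a = b \<Longrightarrow> g b y = c' (\<sigma> a) \<longleftrightarrow> y = c a"
    using cc y ia(2) by (auto simp: inj_on_def)
  have xy: "a = b \<Longrightarrow> g a x = g b y \<longleftrightarrow> x = y"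
    using x y ia(1) by (auto simp: inj_on_def)
  have G1: "Gamma k U ct t c x y = ((a = b \<and> x \<noteq> y \<and> (case t a of C \<Rightarrow> True | SC \<Rightarrow> False | SS \<Rightarrow> x = c a \<or> y = c a))
     \<or> (a \<noteq> b \<and> (case ct of Complete \<Rightarrow> x \<in> Rset U t c a \<and> y \<in> Rset U t c b
          | Star j \<Rightarrow> (b = j \<and> x \<in> Rset U t c a \<and> y \<in> Rset U t c j)
                    \<or> (a = j \<and> x \<in> Rset U t c j \<and> y \<in> Rset U t c b))))"
    by (rule Gamma_at[OF disj x y])
  have G2: "Gamma k U ct' t' c' (g a x) (g b y) = ((\<sigma> a = \<sigma> b \<and> g a x \<noteq> g b y \<and> (case t' (\<sigma> a) of C \<Rightarrow> True | SC \<Rightarrow> False | SS \<Rightarrow> g a x = c' (\<sigma> a) \<or> g b y = c' (\<sigma> a)))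
     \<or> (\<sigma> a \<noteq> \<sigma> b \<and> (case ct' of Complete \<Rightarrow> g a x \<in> Rset U t' c' (\<sigma> a) \<and> g b y \<in> Rset U t' c' (\<sigma> b)
          | Star j \<Rightarrow> (\<sigma> b = j \<and> g a x \<in> Rset U t' c' (\<sigma> a) \<and> g b y \<in> Rset U t' c' j)
                    \<or> (\<sigma> a = j \<and> g a x \<in> Rset U t' c' j \<and> g b y \<in> Rset U t' c' (\<sigma> b)))))"
    by (rule Gamma_at[OF disj gx sa(1) gy sa(2)])
  have ta: "t' (\<sigma> a) = t a" using t x(2) by blast
  show ?thesis
  proof (cases "a = b")
    case True
    then have "\<sigma> a = \<sigma> b" by simp
    then have L: "Gamma k U ct t c x y = (x \<noteq> y \<and> (case t a of C \<Rightarrow> True | SC \<Rightarrow> False | SS \<Rightarrow> x = c a \<or> y = c a))"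
      and R: "Gamma k U ct' t' c' (g a x) (g b y) = (g a x \<noteq> g b y \<and> (case t' (\<sigma> a) of C \<Rightarrow> True | SC \<Rightarrow> False | SS \<Rightarrow> g a x = c' (\<sigma> a) \<or> g b y = c' (\<sigma> a)))"
      using G1 G2 True by simp_all
    show ?thesis unfolding L R ta xy[OF True]
      by (cases "t a") (simp_all add: cx cy[OF _ True])
  next
    case False
    then have ne: "\<sigma> a \<noteq> \<sigma> b" using seq x(2) y(2) by blast
    have L: "Gamma k U ct t c x y = (case ct of Complete \<Rightarrow> x \<in> Rset U t c a \<and> y \<in> Rset U t c b
          | Star j \<Rightarrow> (b = j \<and> x \<in> Rset U t c a \<and> y \<in> Rset U t c j)
                    \<or> (a = j \<and> x \<in> Rset U t c j \<and> y \<in> Rset U t c b))"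
      using G1 False by simp
    have R: "Gamma k U ct' t' c' (g a x) (g b y) = (case ct' of Complete \<Rightarrow> g a x \<in> Rset U t' c' (\<sigma> a) \<and> g b y \<in> Rset U t' c' (\<sigma> b)
          | Star j \<Rightarrow> (\<sigma> b = j \<and> g a x \<in> Rset U t' c' (\<sigma> a) \<and> g b y \<in> Rset U t' c' j)
                    \<or> (\<sigma> a = j \<and> g a x \<in> Rset U t' c' j \<and> g b y \<in> Rset U t' c' (\<sigma> b)))"
      using G2 ne by simp
    from ct show ?thesis
    proof (elim disjE exE conjE)
      assume "ct = Complete" "ct' = Complete"
      then show ?thesis unfolding L R using Rx Ry by simp
    next
      fix j assume j: "j < k" "ct = Star j" "ct' = Star (\<sigma> j)"
      have bj: "\<sigma> b = \<sigma> j \<longleftrightarrow> b = j" using seq[OF y(2) j(1)] .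
      have aj: "\<sigma> a = \<sigma> j \<longleftrightarrow> a = j" using seq[OF x(2) j(1)] .
      have P1: "(\<sigma> b = \<sigma> j \<and> g a x \<in> Rset U t' c' (\<sigma> a) \<and> g b y \<in> Rset U t' c' (\<sigma> j))
          = (b = j \<and> x \<in> Rset U t c a \<and> y \<in> Rset U t c j)"
        using bj Rx Ry by auto
      have P2: "(\<sigma> a = \<sigma> j \<and> g a x \<in> Rset U t' c' (\<sigma> j) \<and> g b y \<in> Rset U t' c' (\<sigma> b))
          = (a = j \<and> x \<in> Rset U t c j \<and> y \<in> Rset U t c b)"
        using aj Rx Ry by auto
      show ?thesis unfolding L R using j P1 P2 by simp
    qed
  qed
qed

lemma perm_exists:
  assumes "cs \<in> {1, 2, 3}"
    and p: "case_params k U cs j I c" and p': "case_params k U cs j' I' c'"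
    and cI: "card I = card I'"
  shows "\<exists>\<sigma>. bij_betw \<sigma> {..<k} {..<k} \<and> (\<forall>i<k. \<sigma> i \<in> I' \<longleftrightarrow> i \<in> I)
          \<and> (cs \<noteq> 1 \<longrightarrow> \<sigma> j = j')"
proof (cases "cs = 1")
  case True
  have "I \<subseteq> {..<k}" "I' \<subseteq> {..<k}" using p p' by (auto simp: case_params_def)
  then obtain s where s: "bij_betw s {..<k} {..<k}" "bij_betw s I I'"
    using bij_set[of "{..<k}" "{..<k}" I I'] cI by auto
  have "\<forall>i<k. s i \<in> I' \<longleftrightarrow> i \<in> I"
  proof (intro allI impI)
    fix i assume i: "i < k"
    show "s i \<in> I' \<longleftrightarrow> i \<in> I"
    proof
      assume "s i \<in> I'"
      then obtain i' where "i' \<in> I" "s i' = s i" using s(2) by (metis bij_betw_imp_surj_on imageE)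
      then show "i \<in> I" using s(1) i \<open>I \<subseteq> {..<k}\<close> by (metis bij_betw_imp_inj_on inj_onD lessThan_iff subsetD)
    qed (use s(2) in \<open>auto simp: bij_betw_def\<close>)
  qed
  then show ?thesis using s True by blast
next
  case False
  have pj: "I \<subseteq> {..<k}" "j < k" "j \<notin> I" using p False by (auto simp: case_params_def)
  have pj': "I' \<subseteq> {..<k}" "j' < k" "j' \<notin> I'" using p' False by (auto simp: case_params_def)
  have "I \<subseteq> {..<k} - {j}" "I' \<subseteq> {..<k} - {j'}" using pj pj' by auto
  moreover have "card ({..<k} - {j}) = card ({..<k} - {j'})" using pj pj' by simp
  ultimately obtain s where s: "bij_betw s ({..<k} - {j}) ({..<k} - {j'})" "bij_betw s I I'"
    using bij_set[of "{..<k} - {j}" "{..<k} - {j'}" I I'] cI by auto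
  have b1: "bij_betw (\<lambda>x. j') {j} {j'}" by (simp add: bij_betw_def)
  have "bij_betw (\<lambda>x. if x \<in> {j} then j' else s x) ({j} \<union> ({..<k} - {j})) ({j'} \<union> ({..<k} - {j'}))"
    by (rule bij_betw_disjoint_Un[OF b1 s(1)]) auto
  moreover have "{j} \<union> ({..<k} - {j}) = {..<k}" "{j'} \<union> ({..<k} - {j'}) = {..<k}" using pj pj' by auto
  ultimately have bs: "bij_betw (\<lambda>x. if x = j then j' else s x) {..<k} {..<k}" by simp
  have "\<forall>i<k. (if i = j then j' else s i) \<in> I' \<longleftrightarrow> i \<in> I"
  proof (intro allI impI)
    fix i assume i: "i < k"
    show "(if i = j then j' else s i) \<in> I' \<longleftrightarrow> i \<in> I"
    proof (cases "i = j")
      case True then show ?thesis using pj pj' by simp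
    next
      case F: False
      have "s i \<in> I' \<longleftrightarrow> i \<in> I"
      proof
        assume "s i \<in> I'"
        then obtain i' where "i' \<in> I" "s i' = s i" using s(2) by (metis bij_betw_imp_surj_on imageE)
        moreover have "i \<in> {..<k} - {j}" "i' \<in> {..<k} - {j}" using i F pj calculation by auto
        ultimately show "i \<in> I" using s(1) by (metis bij_betw_imp_inj_on inj_onD)
      qed (use s(2) in \<open>auto simp: bij_betw_def\<close>)
      then show ?thesis using F by simp
    qed
  qed
  then show ?thesis using bs by (intro exI[of _ "\<lambda>x. if x = j then j' else s x"]) auto
qed

theorem lemma7:
  fixes U :: "nat \<Rightarrow> 'a set" and k n cs j j' :: nat and I I' :: "nat set"
    and c c' :: "nat \<Rightarrow> 'a" and G G' :: "'a \<Rightarrow> 'a \<Rightarrow> bool"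
  assumes "k \<ge> 3" and "n \<ge> 2"
    and "\<forall>i<k. finite (U i) \<and> card (U i) = n"
    and "\<forall>i<k. \<forall>l<k. i \<noteq> l \<longrightarrow> U i \<inter> U l = {}"
    and "G \<in> lc_orbit (vertices k U) (complete_multipartite k U)"
    and "G' \<in> lc_orbit (vertices k U) (complete_multipartite k U)"
    and "cs \<in> {1, 2, 3}"
    and "case_params k U cs j I c" and "G = case_graph k U cs j I c"
    and "case_params k U cs j' I' c'" and "G' = case_graph k U cs j' I' c'"
    and "card I = card I'"
  shows "graph_iso (vertices k U) G G'"
proof -
  note fin = assms(3) and disj = assms(4) and p = assms(8) and p' = assms(10)
  obtain \<sigma> where sig: "bij_betw \<sigma> {..<k} {..<k}" and sI: "\<forall>i<k. \<sigma> i \<in> I' \<longleftrightarrow> i \<in> I"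
    and sj: "cs \<noteq> 1 \<longrightarrow> \<sigma> j = j'"
    using perm_exists[OF assms(7) p p' assms(12)] by blast
  have sk: "\<And>i. i < k \<Longrightarrow> \<sigma> i < k" using sig by (auto simp: bij_betw_def)
  have seq: "\<And>i l. i < k \<Longrightarrow> l < k \<Longrightarrow> \<sigma> i = \<sigma> l \<longleftrightarrow> i = l"
    using sig by (auto simp: bij_betw_def inj_on_def)
  have pj: "cs \<noteq> 1 \<Longrightarrow> j < k \<and> j \<notin> I" using p by (auto simp: case_params_def)
  have pj': "cs \<noteq> 1 \<Longrightarrow> j' < k \<and> j' \<notin> I'" using p' by (auto simp: case_params_def)
  have cI: "\<forall>i\<in>I. c i \<in> U i" using p by (auto simp: case_params_def)
  have cI': "\<forall>i\<in>I'. c' i \<in> U i" using p' by (auto simp: case_params_def)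
  have "\<forall>i. \<exists>h. i < k \<longrightarrow> bij_betw h (U i) (U (\<sigma> i)) \<and> (i \<in> I \<longrightarrow> h (c i) = c' (\<sigma> i))"
  proof
    fix i show "\<exists>h. i < k \<longrightarrow> bij_betw h (U i) (U (\<sigma> i)) \<and> (i \<in> I \<longrightarrow> h (c i) = c' (\<sigma> i))"
    proof (cases "i < k")
      case True
      have f: "finite (U i)" "finite (U (\<sigma> i))" "card (U i) = card (U (\<sigma> i))"
        using fin sk[OF True] True by auto
      show ?thesis
      proof (cases "i \<in> I")
        case iI: True
        then have "c i \<in> U i" "c' (\<sigma> i) \<in> U (\<sigma> i)" using cI cI' sI[rule_format, OF True] by auto
        then show ?thesis using bij_point[OF f] iI by blast
      next
        case False
        then show ?thesis using finite_same_card_bij[OF f] by blast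
      qed
    qed simp
  qed
  from choice[OF this] obtain g where g0: "\<forall>i. i < k \<longrightarrow> bij_betw (g i) (U i) (U (\<sigma> i)) \<and> (i \<in> I \<longrightarrow> g i (c i) = c' (\<sigma> i))"
    by blast
  have g: "\<And>i. i < k \<Longrightarrow> bij_betw (g i) (U i) (U (\<sigma> i)) \<and> (i \<in> I \<longrightarrow> g i (c i) = c' (\<sigma> i))"
    using g0 by blast
  have gb: "\<forall>i<k. bij_betw (g i) (U i) (U (\<sigma> i))" using g by blast
  define idx where "idx x = (SOME i. i < k \<and> x \<in> U i)" for x
  have idx: "\<And>x i. i < k \<Longrightarrow> x \<in> U i \<Longrightarrow> idx x = i"
  proof -
    fix x i assume i: "i < k" "x \<in> U i"
    then have "idx x < k \<and> x \<in> U (idx x)" unfolding idx_def by (metis (mono_tags, lifting) someI)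
    then show "idx x = i" using disj i by blast
  qed
  define f where "f x = g (idx x) x" for x
  have fx: "\<And>x i. i < k \<Longrightarrow> x \<in> U i \<Longrightarrow> f x = g i x" using idx f_def by simp
  have fU: "\<And>x i. i < k \<Longrightarrow> x \<in> U i \<Longrightarrow> f x \<in> U (\<sigma> i)"
    using fx g by (metis bij_betwE)
  have bij: "bij_betw f (vertices k U) (vertices k U)"
    unfolding bij_betw_def
  proof
    show "inj_on f (vertices k U)"
    proof (rule inj_onI)
      fix x y assume "x \<in> vertices k U" "y \<in> vertices k U" and e: "f x = f y"
      then obtain a b where ab: "a < k" "x \<in> U a" "b < k" "y \<in> U b" by (auto simp: vertices_def)
      have "f x \<in> U (\<sigma> a)" "f y \<in> U (\<sigma> b)" using fU ab by auto
      then have "\<sigma> a = \<sigma> b" using e disj sk[OF ab(1)] sk[OF ab(3)] by (metis disjoint_iff)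
      then have "a = b" using seq ab by blast
      then show "x = y" using e fx ab g[of a] by (metis bij_betw_imp_inj_on inj_onD)
    qed
  next
    show "f ` vertices k U = vertices k U"
    proof
      show "f ` vertices k U \<subseteq> vertices k U" using fU sk by (fastforce simp: vertices_def)
    next
      show "vertices k U \<subseteq> f ` vertices k U"
      proof
        fix z assume "z \<in> vertices k U"
        then obtain m where m: "m < k" "z \<in> U m" by (auto simp: vertices_def)
        then obtain a where a: "a < k" "\<sigma> a = m" using sig by (metis bij_betw_imp_surj_on imageE lessThan_iff)
        then obtain x where "x \<in> U a" "g a x = z" using g[OF a(1)] m by (metis bij_betw_imp_surj_on imageE)
        then show "z \<in> f ` vertices k U" using fx a by (force simp: vertices_def)
      qed
    qed
  qed
  define t where "t = case_types cs j I"
  define t' where "t' = case_types cs j' I'"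
  have tt: "\<forall>i<k. t' (\<sigma> i) = t i"
  proof (intro allI impI)
    fix i assume i: "i < k"
    show "t' (\<sigma> i) = t i"
    proof (cases "cs = 1")
      case True then show ?thesis using sI[rule_format, OF i] unfolding t_def t'_def case_types_def by auto
    next
      case False
      have jk: "j < k" using pj False by blast
      have "\<sigma> i = j' \<longleftrightarrow> i = j" using sj False seq[OF i jk] by simp
      then show ?thesis using sI[rule_format, OF i] False unfolding t_def t'_def case_types_def by auto
    qed
  qed
  have cc: "\<forall>i<k. t i = SS \<longrightarrow> c i \<in> U i \<and> c' (\<sigma> i) = g i (c i)"
  proof (intro allI impI)
    fix i assume i: "i < k" "t i = SS"
    then have "i \<in> I" unfolding t_def case_types_def by (auto split: if_splits)
    then show "c i \<in> U i \<and> c' (\<sigma> i) = g i (c i)" using cI g i by auto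
  qed
  have ct: "(case_ctype cs j = Complete \<and> case_ctype cs j' = Complete) \<or>
     (\<exists>j0. j0 < k \<and> case_ctype cs j = Star j0 \<and> case_ctype cs j' = Star (\<sigma> j0))"
    using sj pj unfolding case_ctype_def by auto
  have "\<forall>x\<in>vertices k U. \<forall>y\<in>vertices k U. G x y = G' (f x) (f y)"
  proof (intro ballI)
    fix x y assume "x \<in> vertices k U" "y \<in> vertices k U"
    then obtain a b where ab: "a < k" "x \<in> U a" "b < k" "y \<in> U b" by (auto simp: vertices_def)
    have tr: "Gamma k U (case_ctype cs j) t c x y = Gamma k U (case_ctype cs j') t' c' (g a x) (g b y)"
      using transport[OF disj sig gb tt cc ct ab(2,1) ab(4,3)] .
    have "G x y = Gamma k U (case_ctype cs j') t' c' (g a x) (g b y)"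
      using tr unfolding assms(9) case_graph_def t_def .
    then show "G x y = G' (f x) (f y)"
      using fx[OF ab(1,2)] fx[OF ab(3,4)] unfolding assms(11) case_graph_def t'_def by simp
  qed
  then show ?thesis unfolding graph_iso_def using bij by blast
qed

end
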